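(* Let $N$ be a society, $D$ an $N$-coalition, $\nabla$ an ES basic fusion operator satisfying (ESF-SD), (ESF-P) and (ESF-I), and $w\ne w'$ interpretations. Suppose $E_{w,w'},E_{w'}\in\mathcal E$ satisfy $[\![B(E_{w,w'})]\!]=\{w,w'\}$, $[\![B(E_{w'})]\!]=\{w'\}$, and $D$ is locally decisive for $E_{w,w'}$ against $E_{w'}$. Then for every interpretation $w''\notin\{w,w'\}$ and every $E_{w',w''}\in\mathcal E$ with $[\![B(E_{w',w''})]\!]=\{w',w''\}$, $D$ is decisive for $E_{w',w''}$ against $E_{w'}$.
   Context: Setting: epistemic space $(\mathcal E,B,\mathcal L_{\mathcal P})$ ($\mathcal E$ nonempty, $B:\mathcal E\to$ propositional formulas over finite $\mathcal P$, $|\mathcal P|\ge2$, image modulo equivalence exactly the consistent formulas; $[\![\phi]\!]$ models; $\varphi_M$ a formula with models exactly $M$); agents: well-ordered set $\mathcal S$; society: nonempty finite $N\subseteq\mathcal S$; $N$-profile $\Phi:N\to\mathcal E$, $E_i=\Phi(i)$, identified with $E_i$ if $N=\{i\}$; profiles on $\{i_1<\dots<i_n\}$, $\{j_1<\dots<j_m\}$ equivalent if $n=m$ and entries coincide position-wise. ES basic fusion operator: a map $\nabla(\Phi,E)\in\mathcal E$ with (ESF1) $B(\nabla(\Phi,E))\vdash B(E)$; (ESF2) equivalent profiles and $B(E)\equiv B(E')$ give equivalent $B(\nabla)$; (ESF3) if $B(E)\equiv B(E')\wedge B(E'')$ then $B(\nabla(\Phi,E'))\wedge B(E'')\vdash B(\nabla(\Phi,E))$;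 (ESF4) if moreover $B(\nabla(\Phi,E'))\wedge B(E'')\nvdash\bot$ then $B(\nabla(\Phi,E))\vdash B(\nabla(\Phi,E'))\wedge B(E'')$. (ESF-SD): for every agent $i$, interpretations $w_1,w_2,w_3$ and $E_{w_1,w_2},E_{w_2,w_3}$ with $[\![B(E_{w_1,w_2})]\!]=\{w_1,w_2\}$, $[\![B(E_{w_2,w_3})]\!]=\{w_2,w_3\}$, there exist $i$-profiles realising each of: (i) $B(\nabla(E_i,E_{w_1,w_2}))\equiv\varphi_{w_1,w_2}$ and $B(\nabla(E_i,E_{w_2,w_3}))\equiv\varphi_{w_2,w_3}$; (ii) $\equiv\varphi_{w_1,w_2}$ and $\equiv\varphi_{w_2}$; (iii) $\equiv\varphi_{w_1}$ and $\equiv\varphi_{w_2,w_3}$; (iv) $\equiv\varphi_{w_1}$ and $\equiv\varphi_{w_2}$. (ESF-P): for every $N$, $N$-profile $\Phi$, $E,E'$: if $\bigwedge_{i\in N}B(\nabla(E_i,E))\nvdash\bot$ and $B(\nabla(E_i,E))\wedge B(E')\vdash\bot$ for all $i\in N$ then $B(\nabla(\Phi,E))\wedge B(E')\vdash\bot$. (ESF-I): for every $N$, $N$-profiles $\Phi,\Phi'$, $E$: if for every $E'$ with $B(E')\vdash B(E)$, $B(\nabla(E_j,E'))\equiv B(\nabla(E'_j,E'))$ for all $j\in N$, then $B(\nabla(\Phi,E))\equiv B(\nabla(\Phi',E))$. An $N$-coalition is a subset $D\subseteq N$. $D$ is locally decisive for $E$ against $E'$ if for every $N$-profile $\Phi$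 with (i) $B(\nabla(E_i,E))\wedge B(E')\vdash\bot$ for all $i\in D$, (ii) $B(\nabla(E_j,E))\equiv B(E')$ for all $j\in N\setminus D$, (iii) $\bigwedge_{i\in D}B(\nabla(E_i,E))\nvdash\bot$, we have $B(\nabla(\Phi,E))\wedge B(E')\vdash\bot$. $D$ is decisive for $E$ against $E'$ if the same conclusion holds for every $N$-profile satisfying only (i) and (iii). *)

theory Defs
  imports Main "HOL-Library.FuncSet"
begin

datatype 'p form = Atom 'p | Bot | Top | Neg "'p form" | And "'p form" "'p form"
  | Or "'p form" "'p form" | Imp "'p form" "'p form"

fun sat :: "'p set \<Rightarrow> 'p form \<Rightarrow> bool" where
  "sat w (Atom p) = (p \<in> w)"
| "sat w Bot = False"
| "sat w Top = True"
| "sat w (Neg f) = (\<not> sat w f)"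
| "sat w (And f g) = (sat w f \<and> sat w g)"
| "sat w (Or f g) = (sat w f \<or> sat w g)"
| "sat w (Imp f g) = (sat w f \<longrightarrow> sat w g)"

definition models :: "'p form \<Rightarrow> 'p set set" where
  "models f = {w. sat w f}"

definition entails :: "'p form \<Rightarrow> 'p form \<Rightarrow> bool" (infix "\<turnstile>" 55) where
  "f \<turnstile> g \<longleftrightarrow> models f \<subseteq> models g"

definition fequiv :: "'p form \<Rightarrow> 'p form \<Rightarrow> bool" (infix "\<equiv>\<^sub>F" 55) where
  "f \<equiv>\<^sub>F g \<longleftrightarrow> models f = models g"

definition conj_consistent :: "'i set \<Rightarrow> ('i \<Rightarrow> 'p form) \<Rightarrow> bool" where
  "conj_consistent I f \<longleftrightarrow> (\<exists>w. \<forall>i\<in>I. sat w (f i))"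

definition epistemic_space :: "('e \<Rightarrow> 'p form) \<Rightarrow> bool" where
  "epistemic_space B \<longleftrightarrow> (\<forall>E. \<not> (B E \<turnstile> Bot)) \<and> (\<forall>f. \<not> (f \<turnstile> Bot) \<longrightarrow> (\<exists>E. B E \<equiv>\<^sub>F f))"

definition society :: "'s set \<Rightarrow> bool" where
  "society N \<longleftrightarrow> finite N \<and> N \<noteq> {}"

definition profile :: "'s set \<Rightarrow> ('s \<Rightarrow> 'e) \<Rightarrow> bool" where
  "profile N \<Phi> \<longleftrightarrow> \<Phi> \<in> extensional N"

text \<open>The {i}-profile identified with E.\<close>
definition single :: "'s \<Rightarrow> 'e \<Rightarrow> ('s \<Rightarrow> 'e)" where
  "single i E = restrict (\<lambda>_. E) {i}"

definition profile_equiv :: "'s::linorder set \<Rightarrow> ('s \<Rightarrow> 'e) \<Rightarrow> 's set \<Rightarrow> ('s \<Rightarrow> 'e) \<Rightarrow> bool" where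
  "profile_equiv N \<Phi> M \<Psi> \<longleftrightarrow>
     map \<Phi> (sorted_list_of_set N) = map \<Psi> (sorted_list_of_set M)"

type_synonym ('s, 'e) fusion = "'s set \<Rightarrow> ('s \<Rightarrow> 'e) \<Rightarrow> 'e \<Rightarrow> 'e"

definition ES_basic_fusion :: "('e \<Rightarrow> 'p form) \<Rightarrow> ('s::wellorder, 'e) fusion \<Rightarrow> bool" where
  "ES_basic_fusion B nabla \<longleftrightarrow>
    (\<forall>N \<Phi> E. society N \<and> profile N \<Phi> \<longrightarrow> B (nabla N \<Phi> E) \<turnstile> B E) \<and>
    (\<forall>N \<Phi> M \<Psi> E E'. society N \<and> profile N \<Phi> \<and> society M \<and> profile M \<Psi> \<and>
        profile_equiv N \<Phi> M \<Psi> \<and> B E \<equiv>\<^sub>F B E' \<longrightarrow> B (nabla N \<Phi> E) \<equiv>\<^sub>F B (nabla M \<Psi> E')) \<and>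
    (\<forall>N \<Phi> E E' E''. society N \<and> profile N \<Phi> \<and> B E \<equiv>\<^sub>F And (B E') (B E'') \<longrightarrow>
        And (B (nabla N \<Phi> E')) (B E'') \<turnstile> B (nabla N \<Phi> E)) \<and>
    (\<forall>N \<Phi> E E' E''. society N \<and> profile N \<Phi> \<and> B E \<equiv>\<^sub>F And (B E') (B E'') \<and>
        \<not> (And (B (nabla N \<Phi> E')) (B E'') \<turnstile> Bot) \<longrightarrow>
        B (nabla N \<Phi> E) \<turnstile> And (B (nabla N \<Phi> E')) (B E''))"

definition ESF_SD :: "('e \<Rightarrow> 'p form) \<Rightarrow> ('s, 'e) fusion \<Rightarrow> bool" where
  "ESF_SD B nabla \<longleftrightarrow>
    (\<forall>i w1 w2 w3 E12 E23. w1 \<noteq> w2 \<and> w2 \<noteq> w3 \<and> w1 \<noteq> w3 \<and>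
       models (B E12) = {w1, w2} \<and> models (B E23) = {w2, w3} \<longrightarrow>
       (\<exists>Ei. models (B (nabla {i} (single i Ei) E12)) = {w1, w2} \<and>
             models (B (nabla {i} (single i Ei) E23)) = {w2, w3}) \<and>
       (\<exists>Ei. models (B (nabla {i} (single i Ei) E12)) = {w1, w2} \<and>
             models (B (nabla {i} (single i Ei) E23)) = {w2}) \<and>
       (\<exists>Ei. models (B (nabla {i} (single i Ei) E12)) = {w1} \<and>
             models (B (nabla {i} (single i Ei) E23)) = {w2, w3}) \<and>
       (\<exists>Ei. models (B (nabla {i} (single i Ei) E12)) = {w1} \<and>
             models (B (nabla {i} (single i Ei) E23)) = {w2}))"

definition ESF_P :: "('e \<Rightarrow> 'p form) \<Rightarrow> ('s, 'e) fusion \<Rightarrow> bool" where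
  "ESF_P B nabla \<longleftrightarrow>
    (\<forall>N \<Phi> E E'. society N \<and> profile N \<Phi> \<and>
       conj_consistent N (\<lambda>i. B (nabla {i} (single i (\<Phi> i)) E)) \<and>
       (\<forall>i\<in>N. And (B (nabla {i} (single i (\<Phi> i)) E)) (B E') \<turnstile> Bot) \<longrightarrow>
       And (B (nabla N \<Phi> E)) (B E') \<turnstile> Bot)"

definition ESF_I :: "('e \<Rightarrow> 'p form) \<Rightarrow> ('s, 'e) fusion \<Rightarrow> bool" where
  "ESF_I B nabla \<longleftrightarrow>
    (\<forall>N \<Phi> \<Psi> E. society N \<and> profile N \<Phi> \<and> profile N \<Psi> \<and>
       (\<forall>E'. B E' \<turnstile> B E \<longrightarrow>
          (\<forall>j\<in>N. B (nabla {j} (single j (\<Phi> j)) E') \<equiv>\<^sub>F B (nabla {j} (single j (\<Psi> j)) E'))) \<longrightarrow>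
       B (nabla N \<Phi> E) \<equiv>\<^sub>F B (nabla N \<Psi> E))"

definition locally_decisive ::
  "('e \<Rightarrow> 'p form) \<Rightarrow> ('s, 'e) fusion \<Rightarrow> 's set \<Rightarrow> 's set \<Rightarrow> 'e \<Rightarrow> 'e \<Rightarrow> bool" where
  "locally_decisive B nabla N D E E' \<longleftrightarrow>
    (\<forall>\<Phi>. profile N \<Phi> \<and>
       (\<forall>i\<in>D. And (B (nabla {i} (single i (\<Phi> i)) E)) (B E') \<turnstile> Bot) \<and>
       (\<forall>j\<in>N - D. B (nabla {j} (single j (\<Phi> j)) E) \<equiv>\<^sub>F B E') \<and>
       conj_consistent D (\<lambda>i. B (nabla {i} (single i (\<Phi> i)) E)) \<longrightarrow>
       And (B (nabla N \<Phi> E)) (B E') \<turnstile> Bot)"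

definition decisive ::
  "('e \<Rightarrow> 'p form) \<Rightarrow> ('s, 'e) fusion \<Rightarrow> 's set \<Rightarrow> 's set \<Rightarrow> 'e \<Rightarrow> 'e \<Rightarrow> bool" where
  "decisive B nabla N D E E' \<longleftrightarrow>
    (\<forall>\<Phi>. profile N \<Phi> \<and>
       (\<forall>i\<in>D. And (B (nabla {i} (single i (\<Phi> i)) E)) (B E') \<turnstile> Bot) \<and>
       conj_consistent D (\<lambda>i. B (nabla {i} (single i (\<Phi> i)) E)) \<longrightarrow>
       And (B (nabla N \<Phi> E)) (B E') \<turnstile> Bot)"

end

theory Submission
  imports Defs
begin

lemma models_And[simp]: "models (And f g) = models f \<inter> models g"
  by (auto simp: models_def)

lemma entails_Bot: "(f \<turnstile> Bot) \<longleftrightarrow> models f = {}"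
  by (auto simp: entails_def models_def)

lemma ent_iff: "(f \<turnstile> g) \<longleftrightarrow> models f \<subseteq> models g"
  by (simp add: entails_def)

lemma single_ok: "society {j}" "profile {j} (single j X)"
  by (auto simp: society_def profile_def single_def)

lemma es_ne: "epistemic_space B \<Longrightarrow> models (B E) \<noteq> {}"
  by (auto simp: epistemic_space_def entails_Bot)

lemma esf1: "ES_basic_fusion B nabla \<Longrightarrow> society N \<Longrightarrow> profile N \<Phi> \<Longrightarrow>
   models (B (nabla N \<Phi> E)) \<subseteq> models (B E)"
  by (auto simp: ES_basic_fusion_def ent_iff)

lemma esf2: "ES_basic_fusion B nabla \<Longrightarrow> society N \<Longrightarrow> profile N \<Phi> \<Longrightarrow> society M \<Longrightarrow> profile M \<Psi> \<Longrightarrow>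
   profile_equiv N \<Phi> M \<Psi> \<Longrightarrow> B E \<equiv>\<^sub>F B E' \<Longrightarrow> B (nabla N \<Phi> E) \<equiv>\<^sub>F B (nabla M \<Psi> E')"
  unfolding ES_basic_fusion_def by blast

lemma esfI: "ESF_I B nabla \<Longrightarrow> society N \<Longrightarrow> profile N \<Phi> \<Longrightarrow> profile N \<Psi> \<Longrightarrow>
  (\<And>E' j. B E' \<turnstile> B E \<Longrightarrow> j \<in> N \<Longrightarrow>
     B (nabla {j} (single j (\<Phi> j)) E') \<equiv>\<^sub>F B (nabla {j} (single j (\<Psi> j)) E')) \<Longrightarrow>
  B (nabla N \<Phi> E) \<equiv>\<^sub>F B (nabla N \<Psi> E)"
  unfolding ESF_I_def by blast

definition charf :: "'p set \<Rightarrow> 'p list \<Rightarrow> 'p form" where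
  "charf w xs = foldr (\<lambda>p f. And (if p \<in> w then Atom p else Neg (Atom p)) f) xs Top"

lemma sat_charf: "sat v (charf w xs) \<longleftrightarrow> (\<forall>p\<in>set xs. (p \<in> v \<longleftrightarrow> p \<in> w))"
  by (induction xs) (auto simp: charf_def)

definition disf :: "'p set list \<Rightarrow> 'p list \<Rightarrow> 'p form" where
  "disf ws xs = foldr (\<lambda>w f. Or (charf w xs) f) ws Bot"

lemma sat_disf: "sat v (disf ws xs) \<longleftrightarrow> (\<exists>w\<in>set ws. \<forall>p\<in>set xs. (p \<in> v \<longleftrightarrow> p \<in> w))"
  by (induction ws) (auto simp: disf_def sat_charf)

lemma exists_E:
  fixes B :: "'e \<Rightarrow> 'p::finite form"
  assumes "epistemic_space B" "M \<noteq> {}"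
  shows "\<exists>E. models (B E) = M"
proof -
  have "finite M" by simp
  then obtain ws where ws: "set ws = M" using finite_list by blast
  obtain xs :: "'p list" where xs: "set xs = UNIV" using finite_list finite_UNIV by blast
  have m: "models (disf ws xs) = M"
    using ws xs by (auto simp: models_def sat_disf) (metis set_eq_iff)+
  then have "\<not> (disf ws xs \<turnstile> Bot)" using assms(2) by (simp add: entails_Bot)
  then obtain E where "B E \<equiv>\<^sub>F disf ws xs" using assms(1) by (auto simp: epistemic_space_def)
  then show ?thesis using m by (auto simp: fequiv_def)
qed

lemma restrict_L:
  assumes "ES_basic_fusion B nabla" "society N" "profile N \<Phi>"
    and "models (B E) \<subseteq> models (B E3)"
    and "models (B (nabla N \<Phi> E3)) \<inter> models (B E) \<noteq> {}"
  shows "models (B (nabla N \<Phi> E)) = models (B (nabla N \<Phi> E3)) \<inter> models (B E)"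
proof -
  have eq: "B E \<equiv>\<^sub>F And (B E3) (B E)" using assms(4) by (auto simp: fequiv_def)
  have 3: "And (B (nabla N \<Phi> E3)) (B E) \<turnstile> B (nabla N \<Phi> E)"
    using assms(1-3) eq unfolding ES_basic_fusion_def by blast
  have "\<not> (And (B (nabla N \<Phi> E3)) (B E) \<turnstile> Bot)" using assms(5) by (simp add: entails_Bot)
  then have 4: "B (nabla N \<Phi> E) \<turnstile> And (B (nabla N \<Phi> E3)) (B E)"
    using assms(1-3) eq unfolding ES_basic_fusion_def by blast
  show ?thesis using 3 4 by (auto simp: ent_iff)
qed

lemma trans3:
  assumes "ES_basic_fusion B nabla" "epistemic_space B" "society N" "profile N \<Phi>"
    and "a \<noteq> b" "b \<noteq> c" "a \<noteq> c"
    and "models (B E3) = {a,b,c}" "models (B Eab) = {a,b}" "models (B Ebc) = {b,c}"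
    "models (B Eac) = {a,c}"
    and "models (B (nabla N \<Phi> Eab)) = {a} \<or> models (B (nabla N \<Phi> Eab)) = {a,b}"
    and "models (B (nabla N \<Phi> Ebc)) = {b}"
  shows "models (B (nabla N \<Phi> Eac)) = {a}"
proof -
  let ?S = "models (B (nabla N \<Phi> E3))"
  have S1: "?S \<subseteq> {a,b,c}" using esf1[OF assms(1,3,4), where E=E3] assms(8) by simp
  have S2: "?S \<noteq> {}" using es_ne[OF assms(2)] by blast
  have c: "c \<notin> ?S"
  proof
    assume "c \<in> ?S"
    then have "models (B (nabla N \<Phi> Ebc)) = ?S \<inter> {b,c}"
      using restrict_L[OF assms(1,3,4), of Ebc E3] assms(8,10) by auto
    then show False using \<open>c \<in> ?S\<close> assms(13) assms(6) by auto
  qed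
  have "models (B (nabla N \<Phi> Eab)) = ?S \<inter> models (B Eab)"
  proof (rule restrict_L[OF assms(1,3,4)])
    show "models (B Eab) \<subseteq> models (B E3)" using assms(8,9) by auto
    show "?S \<inter> models (B Eab) \<noteq> {}" using assms(9) S1 S2 c by blast
  qed
  then have "a \<in> ?S" using assms(9,12) assms(5) by auto
  then have "models (B (nabla N \<Phi> Eac)) = ?S \<inter> {a,c}"
    using restrict_L[OF assms(1,3,4), of Eac E3] assms(8,11) by auto
  then show ?thesis using c \<open>a \<in> ?S\<close> by auto
qed

lemma sd:
  assumes "ESF_SD B nabla" "w1 \<noteq> w2" "w2 \<noteq> w3" "w1 \<noteq> w3"
    "models (B E12) = {w1, w2}" "models (B E23) = {w2, w3}"
  shows "\<exists>Ei. models (B (nabla {i} (single i Ei) E12)) = {w1, w2} \<and>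
             models (B (nabla {i} (single i Ei) E23)) = {w2}"
    "\<exists>Ei. models (B (nabla {i} (single i Ei) E12)) = {w1} \<and>
             models (B (nabla {i} (single i Ei) E23)) = {w2}"
proof -
  have "(\<exists>Ei. models (B (nabla {i} (single i Ei) E12)) = {w1, w2} \<and>
             models (B (nabla {i} (single i Ei) E23)) = {w2}) \<and>
        (\<exists>Ei. models (B (nabla {i} (single i Ei) E12)) = {w1} \<and>
             models (B (nabla {i} (single i Ei) E23)) = {w2})"
    using assms(1)[unfolded ESF_SD_def, THEN spec[of _ i], THEN spec[of _ w1],
        THEN spec[of _ w2], THEN spec[of _ w3], THEN spec[of _ E12], THEN spec[of _ E23]]
      assms(2-6) by blast
  then show "\<exists>Ei. models (B (nabla {i} (single i Ei) E12)) = {w1, w2} \<and>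
             models (B (nabla {i} (single i Ei) E23)) = {w2}"
    "\<exists>Ei. models (B (nabla {i} (single i Ei) E12)) = {w1} \<and>
             models (B (nabla {i} (single i Ei) E23)) = {w2}" by blast+
qed

theorem proposition15:
  fixes B :: "'e \<Rightarrow> 'p::finite form"
    and nabla :: "('s::wellorder, 'e) fusion"
    and N D :: "'s set"
    and w w' :: "'p set"
    and Eww' Ew' :: 'e
  assumes "card (UNIV :: 'p set) \<ge> 2"
    and "epistemic_space B"
    and "ES_basic_fusion B nabla"
    and "ESF_SD B nabla" and "ESF_P B nabla" and "ESF_I B nabla"
    and "society N" and "D \<subseteq> N"
    and "w \<noteq> w'"
    and "models (B Eww') = {w, w'}"
    and "models (B Ew') = {w'}"
    and "locally_decisive B nabla N D Eww' Ew'"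
  shows "\<forall>w'' E. w'' \<notin> {w, w'} \<and> models (B E) = {w', w''} \<longrightarrow>
           decisive B nabla N D E Ew'"
proof (intro allI impI)
  fix w'' E
  assume h: "w'' \<notin> {w, w'} \<and> models (B E) = {w', w''}"
  have d1: "w'' \<noteq> w" "w'' \<noteq> w'" using h by auto
  have mE: "models (B E) = {w', w''}" using h by auto
  obtain Ew''w where mw''w: "models (B Ew''w) = {w'', w}" using exists_E[OF assms(2), of "{w'', w}"] by auto
  obtain E3 where m3: "models (B E3) = {w'', w, w'}" using exists_E[OF assms(2), of "{w'', w, w'}"] by auto
  obtain Ew where mw: "models (B Ew) = {w}" using exists_E[OF assms(2), of "{w}"] by auto
  have mE': "models (B E) = {w'', w'}" using mE by (simp add: insert_commute)
  have mww': "models (B Eww') = {w', w}" using assms(10) by (simp add: insert_commute)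
  have m3a: "models (B E3) = {w'', w', w}" using m3 by (simp add: insert_commute)
  have m3b: "models (B E3) = {w', w'', w}" using m3 by (simp add: insert_commute)
  show "decisive B nabla N D E Ew'"
    unfolding decisive_def
  proof (intro allI impI)
    fix \<Phi>
    assume hp: "profile N \<Phi> \<and>
       (\<forall>i\<in>D. And (B (nabla {i} (single i (\<Phi> i)) E)) (B Ew') \<turnstile> Bot) \<and>
       conj_consistent D (\<lambda>i. B (nabla {i} (single i (\<Phi> i)) E))"
    define T where "T j = models (B (nabla {j} (single j (\<Phi> j)) E))" for j
    have Tsub: "T j \<subseteq> {w', w''}" "T j \<noteq> {}" for j
      using esf1[OF assms(3) single_ok, of j "\<Phi> j" E] mE es_ne[OF assms(2)]
      by (auto simp: T_def)
    have TD: "T j = {w''}" if "j \<in> D" for j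
      using hp that Tsub[of j] assms(11) by (auto simp: T_def entails_Bot)
    define P where "P j Ei \<longleftrightarrow> models (B (nabla {j} (single j Ei) E)) = T j \<and>
        models (B (nabla {j} (single j Ei) Ew''w)) = {w''} \<and>
        models (B (nabla {j} (single j Ei) Eww')) = (if j \<in> D then {w} else {w'})" for j Ei
    have ex: "\<exists>Ei. P j Ei" for j
    proof (cases "j \<in> D")
      case True
      obtain Ei where e: "models (B (nabla {j} (single j Ei) Ew''w)) = {w''}"
        "models (B (nabla {j} (single j Ei) Eww')) = {w}"
        using sd(2)[OF assms(4) d1(1) assms(9) d1(2) mw''w assms(10), of j] by blast
      have "models (B (nabla {j} (single j Ei) E)) = {w''}"
        using trans3[OF assms(3,2) single_ok d1(1) assms(9) d1(2) m3 mw''w assms(10) mE'] e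
        by simp
      then show ?thesis using e True TD[OF True] unfolding P_def by auto
    next
      case False
      have "T j = {w''} \<or> T j = {w'} \<or> T j = {w', w''}" using Tsub[of j] by auto
      then show ?thesis
      proof (elim disjE)
        assume t: "T j = {w''}"
        obtain Ei where e: "models (B (nabla {j} (single j Ei) E)) = {w''}"
          "models (B (nabla {j} (single j Ei) Eww')) = {w'}"
          using sd(2)[OF assms(4) d1(2) assms(9)[symmetric] d1(1) mE' mww', of j] by blast
        have "models (B (nabla {j} (single j Ei) Ew''w)) = {w''}"
          using trans3[OF assms(3,2) single_ok d1(2) assms(9)[symmetric] d1(1) m3a mE' mww' mw''w] e
          by simp
        then show ?thesis using e t False unfolding P_def by auto
      next
        assume t: "T j = {w'}"
        obtain Ei where e: "models (B (nabla {j} (single j Ei) E)) = {w'}"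
          "models (B (nabla {j} (single j Ei) Ew''w)) = {w''}"
          using sd(2)[OF assms(4) d1(2)[symmetric] d1(1) assms(9)[symmetric] mE mw''w, of j] by blast
        have "models (B (nabla {j} (single j Ei) Eww')) = {w'}"
          using trans3[OF assms(3,2) single_ok d1(2)[symmetric] d1(1) assms(9)[symmetric] m3b mE mw''w mww'] e
          by simp
        then show ?thesis using e t False unfolding P_def by auto
      next
        assume t: "T j = {w', w''}"
        obtain Ei where e: "models (B (nabla {j} (single j Ei) E)) = {w', w''}"
          "models (B (nabla {j} (single j Ei) Ew''w)) = {w''}"
          using sd(1)[OF assms(4) d1(2)[symmetric] d1(1) assms(9)[symmetric] mE mw''w, of j] by blast
        have "models (B (nabla {j} (single j Ei) Eww')) = {w'}"
          using trans3[OF assms(3,2) single_ok d1(2)[symmetric] d1(1) assms(9)[symmetric] m3b mE mw''w mww'] e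
          by simp
        then show ?thesis using e t False unfolding P_def by auto
      qed
    qed
    define \<Phi>' where "\<Phi>' = restrict (\<lambda>j. SOME Ei. P j Ei) N"
    have P': "P j (\<Phi>' j)" if "j \<in> N" for j
      using someI_ex[OF ex[of j]] that by (simp add: \<Phi>'_def)
    have prof': "profile N \<Phi>'" by (simp add: \<Phi>'_def profile_def)
    have sN: "society N" by fact
    have c1: "And (B (nabla N \<Phi>' Eww')) (B Ew') \<turnstile> Bot"
      using assms(12) unfolding locally_decisive_def
    proof (elim allE impE)
      show "profile N \<Phi>' \<and>
       (\<forall>i\<in>D. And (B (nabla {i} (single i (\<Phi>' i)) Eww')) (B Ew') \<turnstile> Bot) \<and>
       (\<forall>j\<in>N - D. B (nabla {j} (single j (\<Phi>' j)) Eww') \<equiv>\<^sub>F B Ew') \<and>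
       conj_consistent D (\<lambda>i. B (nabla {i} (single i (\<Phi>' i)) Eww'))"
      proof (intro conjI ballI)
        show "profile N \<Phi>'" by (rule prof')
      next
        fix i assume i: "i \<in> D"
        then have "models (B (nabla {i} (single i (\<Phi>' i)) Eww')) = {w}"
          using P'[of i] assms(8) by (auto simp: P_def)
        then show "And (B (nabla {i} (single i (\<Phi>' i)) Eww')) (B Ew') \<turnstile> Bot"
          using assms(9,11) by (simp add: entails_Bot)
      next
        fix j assume j: "j \<in> N - D"
        then have "models (B (nabla {j} (single j (\<Phi>' j)) Eww')) = {w'}"
          using P'[of j] by (auto simp: P_def)
        then show "B (nabla {j} (single j (\<Phi>' j)) Eww') \<equiv>\<^sub>F B Ew'"
          using assms(11) by (simp add: fequiv_def)
      next
        have "\<forall>i\<in>D. w \<in> models (B (nabla {i} (single i (\<Phi>' i)) Eww'))"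
          using P' assms(8) by (auto simp: P_def)
        then show "conj_consistent D (\<lambda>i. B (nabla {i} (single i (\<Phi>' i)) Eww'))"
          unfolding conj_consistent_def models_def by blast
      qed
    qed
    have C1: "models (B (nabla N \<Phi>' Eww')) = {w}"
      using c1 esf1[OF assms(3) sN prof', of Eww'] es_ne[OF assms(2), of "nabla N \<Phi>' Eww'"]
        assms(10,11) by (auto simp: entails_Bot)
    have c2: "And (B (nabla N \<Phi>' Ew''w)) (B Ew) \<turnstile> Bot"
      using assms(5) unfolding ESF_P_def
    proof (elim allE impE)
      show "society N \<and> profile N \<Phi>' \<and>
       conj_consistent N (\<lambda>i. B (nabla {i} (single i (\<Phi>' i)) Ew''w)) \<and>
       (\<forall>i\<in>N. And (B (nabla {i} (single i (\<Phi>' i)) Ew''w)) (B Ew) \<turnstile> Bot)"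
      proof (intro conjI ballI)
        show "society N" "profile N \<Phi>'" by (rule sN, rule prof')
      next
        fix i assume i: "i \<in> N"
        then have "models (B (nabla {i} (single i (\<Phi>' i)) Ew''w)) = {w''}"
          using P'[of i] by (auto simp: P_def)
        then show "And (B (nabla {i} (single i (\<Phi>' i)) Ew''w)) (B Ew) \<turnstile> Bot"
          using mw d1 by (simp add: entails_Bot)
      next
        have "\<forall>i\<in>N. w'' \<in> models (B (nabla {i} (single i (\<Phi>' i)) Ew''w))"
          using P' by (auto simp: P_def)
        then show "conj_consistent N (\<lambda>i. B (nabla {i} (single i (\<Phi>' i)) Ew''w))"
          unfolding conj_consistent_def models_def by blast
      qed
    qed
    have C2: "models (B (nabla N \<Phi>' Ew''w)) = {w''}"
      using c2 esf1[OF assms(3) sN prof', of Ew''w] es_ne[OF assms(2), of "nabla N \<Phi>' Ew''w"]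
        mw''w mw by (auto simp: entails_Bot)
    have C3: "models (B (nabla N \<Phi>' E)) = {w''}"
      using trans3[OF assms(3,2) sN prof' d1(1) assms(9) d1(2) m3 mw''w assms(10) mE'] C1 C2
      by simp
    have agree: "B (nabla {j} (single j (\<Phi> j)) E') \<equiv>\<^sub>F B (nabla {j} (single j (\<Phi>' j)) E')"
      if "B E' \<turnstile> B E" "j \<in> N" for E' j
    proof -
      have sub: "models (B E') \<subseteq> {w', w''}" using that(1) mE by (simp add: ent_iff)
      have ne: "models (B E') \<noteq> {}" using es_ne[OF assms(2)] .
      have base: "models (B (nabla {j} (single j (\<Phi>' j)) E)) = models (B (nabla {j} (single j (\<Phi> j)) E))"
        using P'[OF that(2)] by (simp add: P_def T_def)
      show ?thesis
      proof (cases "models (B E') = {w', w''}")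
        case True
        then have eqv: "B E' \<equiv>\<^sub>F B E" using mE by (simp add: fequiv_def)
        have pe: "profile_equiv {j} X {j} X" for X :: "'s \<Rightarrow> 'e"
          by (simp add: profile_equiv_def)
        have "B (nabla {j} (single j X) E') \<equiv>\<^sub>F B (nabla {j} (single j X) E)" for X
          using esf2[OF assms(3) single_ok(1)[of j] single_ok(2)[of j X] single_ok(1)[of j] single_ok(2)[of j X] pe eqv] .
        then show ?thesis using base by (simp add: fequiv_def)
      next
        case False
        have "models (B E') = {w'} \<or> models (B E') = {w''}"
          using sub ne False by blast
        then obtain x where x: "models (B E') = {x}" by blast
        have "models (B (nabla {j} (single j X) E')) = {x}" for X
        proof -
          have "models (B (nabla {j} (single j X) E')) \<subseteq> {x}"
            using esf1[OF assms(3) single_ok(1)[of j] single_ok(2)[of j X], where E=E'] x by simp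
          moreover have "models (B (nabla {j} (single j X) E')) \<noteq> {}"
            by (rule es_ne[OF assms(2)])
          ultimately show ?thesis by blast
        qed
        then show ?thesis by (simp add: fequiv_def)
      qed
    qed
    have "B (nabla N \<Phi> E) \<equiv>\<^sub>F B (nabla N \<Phi>' E)"
      using esfI[OF assms(6) sN _ prof' agree] hp by blast
    then have "models (B (nabla N \<Phi> E)) = {w''}" using C3 by (simp add: fequiv_def)
    then show "And (B (nabla N \<Phi> E)) (B Ew') \<turnstile> Bot"
      using assms(11) d1 by (auto simp: entails_Bot)
  qed
qed

end
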